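(* Let $(\rho_n)$ be a sequence of positive functions on $\mathbb{R}^2$ such that there exist $r>0$ and $\sigma>0$ with $\int_{B_r(0)}\rho_n\,dx>\sigma$ for all $n\in\mathbb{N}$. Let $(u_n)$ be bounded in $L^2(\mathbb{R}^2)$ with $\sup_n B_1(\rho_n,u_n^2)<+\infty$. Then $\int_{\mathbb{R}^2}\log(1+|x|)u_n^2(x)\,dx$ is bounded in $n$. If moreover $B_1(\rho_n,u_n^2)\to0$ and $\|u_n\|_2\to0$, then $\int_{\mathbb{R}^2}\log(1+|x|)u_n^2(x)\,dx\to0$ as $n\to\infty$.
   Context: $B_1(f,g):=\iint_{\mathbb{R}^2\times\mathbb{R}^2}\log(1+|x-y|)f(x)g(y)\,dx\,dy$ for nonnegative measurable $f,g$; $B_r(x)$ is the ball of radius $r$ centered at $x$. *)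

theory Defs
  imports "HOL-Analysis.Analysis"
begin

definition B1 :: "(real^2 \<Rightarrow> real) \<Rightarrow> (real^2 \<Rightarrow> real) \<Rightarrow> ennreal" where
  "B1 f g = (\<integral>\<^sup>+ x. (\<integral>\<^sup>+ y. ennreal (ln (1 + norm (x - y)) * f x * g y) \<partial>lebesgue) \<partial>lebesgue)"

end

theory Submission
  imports Defs
begin

lemma ident_leb[measurable]: "(\<lambda>x::'a::euclidean_space. x) \<in> borel_measurable lebesgue"
  using id_borel_measurable_lebesgue by (simp add: id_def)

lemma key_pt:
  fixes x y :: "real^2" and r :: real
  assumes "x \<in> ball 0 r"
  shows "max 0 (ln (1 + norm y) - ln (1 + r)) \<le> ln (1 + norm (x - y))"
proof -
  have nx: "norm x < r" using assms by (simp add: dist_norm)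
  have r0: "r > 0" using nx norm_ge_zero[of x] by linarith
  have "norm y \<le> norm (x - y) + norm x" by (metis norm_triangle_sub norm_minus_commute add.commute)
  then have "1 + norm y \<le> (1 + norm (x - y)) * (1 + r)"
    using nx by (simp add: algebra_simps) (smt (verit) mult_nonneg_nonneg norm_ge_zero r0)
  then have "ln (1 + norm y) \<le> ln ((1 + norm (x - y)) * (1 + r))"
    using r0 by (subst ln_le_cancel_iff) (auto intro!: add_pos_nonneg mult_pos_pos)
  also have "\<dots> = ln (1 + norm (x - y)) + ln (1 + r)"
  proof -
    have p: "1 + norm (x - y) > 0" using norm_ge_zero[of "x - y"] by linarith
    show ?thesis using r0 p by (simp add: ln_mult)
  qed
  finally show ?thesis by simp
qed

theorem lemma3p1:
  fixes \<rho> u :: "nat \<Rightarrow> real^2 \<Rightarrow> real" and r \<sigma> :: real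
  assumes rho_meas: "\<And>n. \<rho> n \<in> borel_measurable lebesgue"
    and rho_pos: "\<And>n x. \<rho> n x > 0"
    and r_pos: "r > 0" and sigma_pos: "\<sigma> > 0"
    and rho_mass: "\<And>n. (\<integral>\<^sup>+ x\<in>ball 0 r. ennreal (\<rho> n x) \<partial>lebesgue) > ennreal \<sigma>"
    and u_meas: "\<And>n. u n \<in> borel_measurable lebesgue"
    and u_L2bdd: "\<exists>C::real. \<forall>n. (\<integral>\<^sup>+ x. ennreal ((u n x)^2) \<partial>lebesgue) \<le> ennreal C"
    and B1_bdd: "\<exists>C::real. \<forall>n. B1 (\<rho> n) (\<lambda>x. (u n x)^2) \<le> ennreal C"
  shows "(\<exists>M::real. \<forall>n. (\<integral>\<^sup>+ x. ennreal (ln (1 + norm x) * (u n x)^2) \<partial>lebesgue) \<le> ennreal M)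
    \<and> (((\<lambda>n. B1 (\<rho> n) (\<lambda>x. (u n x)^2)) \<longlonglongrightarrow> 0)
         \<and> ((\<lambda>n. (\<integral>\<^sup>+ x. ennreal ((u n x)^2) \<partial>lebesgue)) \<longlonglongrightarrow> 0)
       \<longrightarrow> ((\<lambda>n. (\<integral>\<^sup>+ x. ennreal (ln (1 + norm x) * (u n x)^2) \<partial>lebesgue)) \<longlonglongrightarrow> 0))"
proof -
  define c where "c = ln (1 + r)"
  define w where "w = (\<lambda>y::real^2. max 0 (ln (1 + norm y) - c))"
  define W where "W = (\<lambda>n. \<integral>\<^sup>+ y. ennreal (w y * (u n y)^2) \<partial>lebesgue)"
  define L where "L = (\<lambda>n. \<integral>\<^sup>+ x. ennreal (ln (1 + norm x) * (u n x)^2) \<partial>lebesgue)"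
  define U where "U = (\<lambda>n. \<integral>\<^sup>+ x. ennreal ((u n x)^2) \<partial>lebesgue)"
  define B where "B = (\<lambda>n. B1 (\<rho> n) (\<lambda>x. (u n x)^2))"
  have c0: "c \<ge> 0" using r_pos by (simp add: c_def)
  have w0: "w y \<ge> 0" for y by (simp add: w_def)
  note [measurable] = u_meas rho_meas
  have [measurable]: "ball 0 r \<in> sets lebesgue" by simp
  have wm: "(\<lambda>y. ennreal (w y * (u n y)^2)) \<in> borel_measurable lebesgue" for n
    unfolding w_def by measurable
  have W_le: "ennreal \<sigma> * W n \<le> B n" for n
  proof -
    have "ennreal \<sigma> * W n \<le> (\<integral>\<^sup>+ x\<in>ball 0 r. ennreal (\<rho> n x) \<partial>lebesgue) * W n"
      using rho_mass[of n] by (intro mult_right_mono) auto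
    also have "\<dots> = (\<integral>\<^sup>+ x. ennreal (\<rho> n x) * indicator (ball 0 r) x * W n \<partial>lebesgue)"
      by (rule nn_integral_multc[symmetric]) measurable
    also have "\<dots> \<le> (\<integral>\<^sup>+ x. (\<integral>\<^sup>+ y. ennreal (ln (1 + norm (x - y)) * \<rho> n x * (u n y)^2) \<partial>lebesgue) \<partial>lebesgue)"
    proof (rule nn_integral_mono)
      fix x :: "real^2"
      show "ennreal (\<rho> n x) * indicator (ball 0 r) x * W n
          \<le> (\<integral>\<^sup>+ y. ennreal (ln (1 + norm (x - y)) * \<rho> n x * (u n y)^2) \<partial>lebesgue)"
      proof (cases "x \<in> ball 0 r")
        case False then show ?thesis by simp
      next
        case True
        have "ennreal (\<rho> n x) * indicator (ball 0 r) x * W n = ennreal (\<rho> n x) * W n"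
          using True by simp
        also have "\<dots> = (\<integral>\<^sup>+ y. ennreal (\<rho> n x) * ennreal (w y * (u n y)^2) \<partial>lebesgue)"
          unfolding W_def by (rule nn_integral_cmult[symmetric]) (rule wm)
        also have "\<dots> \<le> (\<integral>\<^sup>+ y. ennreal (ln (1 + norm (x - y)) * \<rho> n x * (u n y)^2) \<partial>lebesgue)"
        proof (rule nn_integral_mono)
          fix y
          have "w y \<le> ln (1 + norm (x - y))" using key_pt[OF True, of y] by (simp add: w_def c_def)
          then have le0: "\<rho> n x * (w y * (u n y)^2) \<le> ln (1 + norm (x - y)) * \<rho> n x * (u n y)^2"
            using rho_pos[of n x] w0[of y]
            by (simp add: mult_left_mono mult_right_mono mult.assoc mult.left_commute)
          have eq: "ennreal (\<rho> n x) * ennreal (w y * (u n y)^2) = ennreal (\<rho> n x * (w y * (u n y)^2))"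
          proof -
            have a: "0 \<le> \<rho> n x" using rho_pos[of n x] by simp
            have b: "0 \<le> w y * (u n y)^2" using w0[of y] by simp
            show ?thesis by (rule ennreal_mult[OF a b, symmetric])
          qed
          show "ennreal (\<rho> n x) * ennreal (w y * (u n y)^2) \<le> ennreal (ln (1 + norm (x - y)) * \<rho> n x * (u n y)^2)"
            unfolding eq by (rule ennreal_leI[OF le0])
        qed
        finally show ?thesis .
      qed
    qed
    also have "\<dots> = B n" unfolding B_def B1_def by simp
    finally show ?thesis .
  qed
  have L_le: "L n \<le> W n + ennreal c * U n" for n
  proof -
    have "L n \<le> (\<integral>\<^sup>+ y. ennreal (w y * (u n y)^2) + ennreal c * ennreal ((u n y)^2) \<partial>lebesgue)"
      unfolding L_def
    proof (rule nn_integral_mono)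
      fix y
      have "ln (1 + norm y) \<le> w y + c" by (simp add: w_def)
      then have "ln (1 + norm y) * (u n y)^2 \<le> w y * (u n y)^2 + c * (u n y)^2"
        by (metis distrib_right mult_right_mono zero_le_power2)
      then show "ennreal (ln (1 + norm y) * (u n y)^2) \<le> ennreal (w y * (u n y)^2) + ennreal c * ennreal ((u n y)^2)"
      proof -
        have "ennreal (w y * (u n y)^2) + ennreal c * ennreal ((u n y)^2) = ennreal (w y * (u n y)^2 + c * (u n y)^2)"
          using w0[of y] c0 by (simp add: ennreal_plus ennreal_mult)
        then show ?thesis using \<open>ln (1 + norm y) * (u n y)^2 \<le> w y * (u n y)^2 + c * (u n y)^2\<close>
          by (simp only:) (rule ennreal_leI)
      qed
    qed
    also have "\<dots> = W n + ennreal c * U n"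
      unfolding W_def U_def w_def
      by (subst nn_integral_add; (measurable)?) (subst nn_integral_cmult; (measurable)?; simp)
    finally show ?thesis .
  qed
  have Lbd: "L n \<le> ennreal (1/\<sigma>) * B n + ennreal c * U n" for n
  proof -
    have "W n = ennreal (1/\<sigma>) * (ennreal \<sigma> * W n)"
    proof -
      have "ennreal (1/\<sigma>) * ennreal \<sigma> = ennreal (1/\<sigma> * \<sigma>)"
        using sigma_pos by (intro ennreal_mult[symmetric]) auto
      also have "\<dots> = 1" using sigma_pos by simp
      finally show ?thesis by (simp add: mult.assoc[symmetric])
    qed
    also have "\<dots> \<le> ennreal (1/\<sigma>) * B n" using W_le by (intro mult_left_mono) auto
    finally show ?thesis using L_le[of n] by (meson add_right_mono order_trans)
  qed
  have part1: "\<exists>M::real. \<forall>n. L n \<le> ennreal M"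
  proof -
    obtain C1 where C1: "\<And>n. B n \<le> ennreal C1" using B1_bdd unfolding B_def by blast
    obtain C2 where C2: "\<And>n. U n \<le> ennreal C2" using u_L2bdd unfolding U_def by blast
    define M where "M = 1/\<sigma> * max C1 0 + c * max C2 0"
    have "L n \<le> ennreal M" for n
    proof -
      have "L n \<le> ennreal (1/\<sigma>) * ennreal (max C1 0) + ennreal c * ennreal (max C2 0)"
      proof -
        have "B n \<le> ennreal (max C1 0)" by (rule order_trans[OF C1 ennreal_leI]) simp
        moreover have "U n \<le> ennreal (max C2 0)" by (rule order_trans[OF C2 ennreal_leI]) simp
        ultimately have "ennreal (1/\<sigma>) * B n + ennreal c * U n \<le> ennreal (1/\<sigma>) * ennreal (max C1 0) + ennreal c * ennreal (max C2 0)"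
          by (intro add_mono mult_left_mono) auto
        then show ?thesis using Lbd[of n] by (rule order_trans[rotated])
      qed
      also have "\<dots> = ennreal M"
      proof -
        have e1: "ennreal (1/\<sigma>) * ennreal (max C1 0) = ennreal (1/\<sigma> * max C1 0)"
          by (rule ennreal_mult[symmetric]) (use sigma_pos in auto)
        have e2: "ennreal c * ennreal (max C2 0) = ennreal (c * max C2 0)"
          by (rule ennreal_mult[symmetric]) (use c0 in auto)
        have e3: "ennreal (1/\<sigma> * max C1 0) + ennreal (c * max C2 0) = ennreal M"
          unfolding M_def by (rule ennreal_plus[symmetric]) (use sigma_pos c0 in auto)
        show ?thesis unfolding e1 e2 e3 ..
      qed
      finally show ?thesis .
    qed
    then show ?thesis by blast
  qed
  have part2: "B \<longlonglongrightarrow> 0 \<and> U \<longlonglongrightarrow> 0 \<longrightarrow> L \<longlonglongrightarrow> 0"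
  proof
    assume h: "B \<longlonglongrightarrow> 0 \<and> U \<longlonglongrightarrow> 0"
    have "(\<lambda>n. ennreal (1/\<sigma>) * B n + ennreal c * U n) \<longlonglongrightarrow> ennreal (1/\<sigma>) * 0 + ennreal c * 0"
      using h by (intro tendsto_intros) auto
    then have t: "(\<lambda>n. ennreal (1/\<sigma>) * B n + ennreal c * U n) \<longlonglongrightarrow> 0" by simp
    show "L \<longlonglongrightarrow> 0"
      by (rule tendsto_sandwich[OF _ _ tendsto_const t]) (use Lbd in auto)
  qed
  show ?thesis using part1 part2 unfolding L_def U_def B_def by blast
qed

end
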